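(* Let $d\ge 3$ and let $K_d$ be the complete graph on the vertex set $\{1,\ldots,d\}$. Let $\alpha\in\mathbb{C}$ be a root of the Ehrhart polynomial $i(\mathcal{P}_{K_d},m)$ of the edge polytope $\mathcal{P}_{K_d}$. Then (1) if $d=3$, then $\alpha\in\{-1,-2\}$; (2) if $d\ge 4$, then $-\tfrac{d}{2}<\operatorname{Re}(\alpha)<0$.
   Context: For a graph $G$ on vertex set $\{1,\ldots,d\}$ with edge set $E(G)$, and an edge $e=\{i,j\}$, set $\rho(e)=\mathbf{e}_i+\mathbf{e}_j\in\mathbb{R}^d$, where $\mathbf{e}_i$ is the $i$-th unit coordinate vector. The edge polytope $\mathcal{P}_G$ is the convex hull of $\{\rho(e): e\in E(G)\}$. For an integral convex polytope $\mathcal{P}\subset\mathbb{R}^N$, its Ehrhart polynomial is the polynomial $i(\mathcal{P},m)$ satisfying $i(\mathcal{P},m)=\#(m\mathcal{P}\cap\mathbb{Z}^N)$ for all integers $m\ge 0$. *)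

theory Defs
  imports "HOL-Analysis.Analysis" "HOL-Computational_Algebra.Polynomial"
begin

text \<open>Vertices of the graph are the elements of the finite type 'n (so d = CARD('n)),
  a graph is given by its set of edges (two-element subsets of 'n).\<close>

definition complete_graph_edges :: "'n set set" where
  "complete_graph_edges = {{i, j} | i j. i \<noteq> j}"

definition rho :: "'n::finite set \<Rightarrow> real ^ 'n" where
  "rho e = (\<Sum>i\<in>e. axis i 1)"

definition edge_polytope :: "'n::finite set set \<Rightarrow> (real ^ 'n) set" where
  "edge_polytope E = convex hull (rho ` E)"

definition lattice_points_count :: "(real ^ 'n::finite) set \<Rightarrow> nat \<Rightarrow> nat" where
  "lattice_points_count P m =
     card {x \<in> (\<lambda>y. real m *\<^sub>R y) ` P. \<forall>i. x $ i \<in> \<int>}"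

definition is_ehrhart_poly :: "(real ^ 'n::finite) set \<Rightarrow> real poly \<Rightarrow> bool" where
  "is_ehrhart_poly P p \<longleftrightarrow> (\<forall>m::nat. poly p (real m) = real (lattice_points_count P m))"

end

theory Submission
  imports Defs "HOL-Library.Infinite_Set"
begin


lemma cm_sq_le:
  fixes u v :: complex and a b :: real
  assumes "a \<ge> 0" "b \<ge> 0" "(b * cmod v)^2 \<le> (a * cmod u)^2"
  shows "b * cmod v \<le> a * cmod u"
  using assms by (meson mult_nonneg_nonneg norm_ge_zero power2_le_imp_le)

lemma norm_shift_mono:
  fixes u :: complex and a b :: real
  assumes "Re u \<ge> 0" "0 \<le> b" "b \<le> a"
  shows "b * cmod (u + of_real a) \<le> a * cmod (u + of_real b)"
proof (rule cm_sq_le)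
  show "0 \<le> a" "0 \<le> b" using assms by auto
  have e1: "(b * cmod (u + of_real a))^2 = b^2 * ((Re u + a)^2 + (Im u)^2)"
    by (simp add: power_mult_distrib cmod_power2)
  have e2: "(a * cmod (u + of_real b))^2 = a^2 * ((Re u + b)^2 + (Im u)^2)"
    by (simp add: power_mult_distrib cmod_power2)
  have "a^2 * (Re u + b)^2 - b^2 * (Re u + a)^2 = Re u * (a - b) * (a * (Re u + b) + b * (Re u + a))"
    by (simp add: algebra_simps power2_eq_square)
  also have "\<dots> \<ge> 0" using assms by (intro mult_nonneg_nonneg) auto
  finally have "a^2 * (Re u + b)^2 \<ge> b^2 * (Re u + a)^2" by simp
  moreover have "a^2 * (Im u)^2 \<ge> b^2 * (Im u)^2"
    using assms by (intro mult_right_mono power_mono) auto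
  ultimately show "(b * cmod (u + of_real a))^2 \<le> (a * cmod (u + of_real b))^2"
    unfolding e1 e2 by (simp add: algebra_simps)
qed

lemma key_upper:
  fixes z :: complex and j :: nat
  assumes "Re z \<ge> 0"
  shows "(if j = 0 then 2 else (real j + 1) / real j) * cmod (z + of_nat j) \<le> cmod (2 * z + of_nat (j + 1))"
proof (cases "j = 0")
  case True
  have "(2 * cmod z)^2 \<le> (cmod (2 * z + 1))^2"
    unfolding power_mult_distrib cmod_power2 using assms by (simp add: power2_eq_square algebra_simps)
  hence "2 * cmod z \<le> cmod (2 * z + 1)" by (rule power2_le_imp_le) simp
  thus ?thesis using True by simp
next
  case False
  hence j: "real j \<ge> 1" by simp
  have "((real j + 1) * cmod (z + of_nat j))^2 \<le> (real j * cmod (2 * z + of_nat (j + 1)))^2"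
  proof -
    have A: "((real j + 1) * cmod (z + of_nat j))^2 = (real j + 1)^2 * ((Re z + j)^2 + (Im z)^2)"
      by (simp add: power_mult_distrib cmod_power2)
    have B: "(real j * cmod (2 * z + of_nat (j + 1)))^2 = (real j)^2 * ((2 * Re z + j + 1)^2 + 4 * (Im z)^2)"
      unfolding power_mult_distrib cmod_power2 by (simp add: power2_eq_square algebra_simps)
    have "(real j)^2 * ((2 * Re z + j + 1)^2 + 4 * (Im z)^2) - (real j + 1)^2 * ((Re z + j)^2 + (Im z)^2)
        = (4 * (real j)^2 - (real j + 1)^2) * ((Re z)^2 + (Im z)^2) + 2 * real j * Re z * (real j + 1) * (real j - 1)"
      by (simp add: algebra_simps power2_eq_square)
    also have "\<dots> \<ge> 0"
    proof -
      have "4 * (real j)^2 - (real j + 1)^2 \<ge> 0" proof -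
        have "real j * real j \<ge> real j * 1" using j by (intro mult_left_mono) auto
        moreover have "4 * (real j)^2 - (real j+1)^2 = 3*(real j * real j) - 2*real j - 1"
          by (simp add: power2_eq_square algebra_simps)
        ultimately show ?thesis using j by linarith
      qed
      thus ?thesis using j assms by (intro add_nonneg_nonneg mult_nonneg_nonneg) auto
    qed
    finally show ?thesis unfolding A B by simp
  qed
  hence "(real j + 1) * cmod (z + of_nat j) \<le> real j * cmod (2 * z + of_nat (j + 1))"
    by (rule power2_le_imp_le) simp
  thus ?thesis using False j by (simp add: field_simps)
qed

lemma root_re_neg:
  fixes z :: complex and d :: nat
  assumes d: "d \<ge> 3" and eq: "(\<Prod>i<d-1. 2*z + of_nat (i+1)) = of_nat d * (\<Prod>i<d-1. z + of_nat i)"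
  shows "Re z < 0"
proof (rule ccontr)
  assume "\<not> Re z < 0" hence z: "Re z \<ge> 0" by simp
  define c where "c j = (if j = 0 then 2 else (real j + 1)/real j)" for j :: nat
  have cprod: "(\<Prod>j<Suc n. c j) = 2 * real (Suc n)" for n
  proof (induction n)
    case 0 thus ?case by (simp add: c_def)
  next
    case (Suc n)
    have "(\<Prod>j<Suc (Suc n). c j) = (\<Prod>j<Suc n. c j) * c (Suc n)" by simp
    also have "\<dots> = 2 * real (Suc (Suc n))" using Suc by (simp add: c_def field_simps)
    finally show ?case .
  qed
  define P where "P = (\<Prod>i<d-1. cmod (z + of_nat i))"
  have P0: "P \<ge> 0" unfolding P_def by (simp add: prod_nonneg)
  have "(\<Prod>i<d-1. c i * cmod (z + of_nat i)) \<le> (\<Prod>i<d-1. cmod (2*z + of_nat (i+1)))"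
    by (rule prod_mono) (use key_upper[OF z] in \<open>auto simp: c_def\<close>)
  also have "\<dots> = cmod (\<Prod>i<d-1. 2*z + of_nat (i+1))" by (simp add: prod_norm)
  also have "\<dots> = real d * P" unfolding eq P_def by (simp add: norm_mult prod_norm)
  finally have "(\<Prod>i<d-1. c i) * P \<le> real d * P" by (simp add: prod.distrib P_def)
  moreover have "(\<Prod>i<d-1. c i) = 2 * real (d - 1)"
    using cprod[of "d-2"] d by (simp add: Suc_diff_Suc numeral_eq_Suc)
  ultimately have "2 * real (d-1) * P \<le> real d * P" by simp
  moreover have "real d < 2 * real (d-1)" using d by (simp add: of_nat_diff)
  ultimately have "P \<le> 0" using P0
    by (metis linorder_not_le mult_strict_right_mono not_less)
  hence "P = 0" using P0 by simp
  hence "cmod (\<Prod>i<d-1. 2*z + of_nat (i+1)) = 0" unfolding eq P_def by (simp add: norm_mult prod_norm)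
  then obtain i where "2*z + of_nat (i+1) = 0" by auto
  hence "Re (2*z + of_nat (i+1)) = 0" by simp
  hence "2 * Re z + real (i+1) = 0" by simp
  thus False using z by simp
qed

lemma norm_abs_le:
  fixes u :: complex and a b :: real
  assumes "Re u \<ge> 0" "\<bar>a\<bar> \<le> b"
  shows "cmod (u + of_real a) \<le> cmod (u + of_real b)"
proof -
  have "(Re u + b)^2 - (Re u + a)^2 = (b - a) * (2 * Re u + a + b)" by (simp add: algebra_simps power2_eq_square)
  also have "\<dots> \<ge> 0" using assms by (intro mult_nonneg_nonneg) auto
  finally have "cmod (u + of_real a)^2 \<le> cmod (u + of_real b)^2"
    unfolding cmod_power2 by simp
  thus ?thesis by (rule power2_le_imp_le) simp
qed

lemma norm_pos_shift:
  fixes u :: complex and a :: real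
  assumes "Re u \<ge> 0" "a > 0"
  shows "cmod (u + of_real a) > 0"
proof -
  have "Re (u + of_real a) > 0" using assms by simp
  have "u + of_real a \<noteq> 0"
  proof
    assume h: "u + of_real a = 0"
    have "Re (u + of_real a) = 0" unfolding h by simp
    thus False using \<open>Re (u + of_real a) > 0\<close> by simp
  qed
  thus ?thesis by simp
qed

lemma claim_step:
  fixes u :: complex and n :: nat
  assumes u: "Re u \<ge> 0" and n: "n \<ge> 1"
  and IH: "real (n+1) * (\<Prod>j<n. cmod (u + of_nat (n+1) - 2 * of_nat j)) < 2^n * (\<Prod>m<n. cmod (u + of_nat m + 1))"
  shows "real (n+2+1) * (\<Prod>j<n+2. cmod (u + of_nat (n+2+1) - 2 * of_nat j)) < 2^(n+2) * (\<Prod>m<n+2. cmod (u + of_nat m + 1))"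
proof -
  define G where "G = (\<Prod>j<n. cmod (u + of_nat (n+1) - 2 * of_nat j))"
  define F where "F = (\<Prod>m<n. cmod (u + of_nat m + 1))"
  define A where "A = cmod (u + of_nat (n+3)) * cmod (u + of_nat (n+1) - 2 * of_nat n)"
  define B where "B = cmod (u + of_nat n + 1) * cmod (u + of_nat (n+1) + 1)"
  have G': "(\<Prod>j<n+2. cmod (u + of_nat (n+3) - 2 * of_nat j)) = A * G"
  proof -
    have "(\<Prod>j<Suc (Suc n). cmod (u + of_nat (n+3) - 2 * of_nat j))
        = cmod (u + of_nat (n+3)) * (\<Prod>j<Suc n. cmod (u + of_nat (n+3) - 2 * of_nat (Suc j)))"
      by (subst prod.lessThan_Suc_shift) simp
    also have "(\<Prod>j<Suc n. cmod (u + of_nat (n+3) - 2 * of_nat (Suc j)))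
        = (\<Prod>j<Suc n. cmod (u + of_nat (n+1) - 2 * of_nat j))"
      by (intro prod.cong refl) (simp add: algebra_simps)
    also have "\<dots> = G * cmod (u + of_nat (n+1) - 2 * of_nat n)" by (simp add: G_def)
    finally show ?thesis by (simp add: A_def)
  qed
  have F': "(\<Prod>m<n+2. cmod (u + of_nat m + 1)) = F * B"
    by (simp add: F_def B_def)
  have G0: "G \<ge> 0" "F \<ge> 0" by (auto simp: G_def F_def prod_nonneg)
  have h1: "real (n+1) * cmod (u + of_nat (n+3)) \<le> real (n+3) * cmod (u + of_nat n + 1)"
    using norm_shift_mono[OF u, of "real (n+1)" "real (n+3)"] by (simp add: add_ac)
  have h2: "cmod (u + of_nat (n+1) - 2 * of_nat n) \<le> cmod (u + of_nat (n+1) + 1)"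
    using norm_abs_le[OF u, of "real (n+1) - 2 * real n" "real (n+2)"] by (simp add: algebra_simps)
  have B0: "B > 0" unfolding B_def using norm_pos_shift[OF u, of "real n + 1"] norm_pos_shift[OF u, of "real (n+1) + 1"]
    by (simp add: add.assoc)
  have "real (n+1) * A \<le> real (n+3) * B"
    unfolding A_def B_def using h1 h2
    using mult_mono[OF h1 h2] by (simp add: mult.assoc)
  hence "real (n+1) * A * real (n+3) \<le> real (n+3) * B * real (n+3)" by (simp add: mult_right_mono)
  also have "\<dots> \<le> 4 * B * real (n+1) * real (n+1)"
  proof -
    have nn: "n * n \<ge> n" using n by simp
    have q1: "(n+3) * (n+3) = n*n + 6*n + 9" by (simp add: algebra_simps)
    have q2: "4 * (n+1) * (n+1) = 4*(n*n) + 8*n + 4" by (simp add: algebra_simps)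
    have "(n+3) * (n+3) \<le> 4 * (n+1) * (n+1)" unfolding q1 q2 using n nn by linarith
    hence "real ((n+3) * (n+3)) \<le> real (4 * (n+1) * (n+1))" by (simp only: of_nat_le_iff)
    hence "B * real ((n+3) * (n+3)) \<le> B * real (4 * (n+1) * (n+1))" using B0 by (intro mult_left_mono) auto
    thus ?thesis by (simp add: algebra_simps)
  qed
  finally have "real (n+3) * A \<le> 4 * B * real (n+1)" by (simp add: mult.commute mult.left_commute mult_le_cancel_left)
  hence "(real (n+3) * A) * G \<le> (4 * B * real (n+1)) * G" using G0 by (intro mult_right_mono) auto
  hence "real (n+3) * A * G \<le> 4 * B * (real (n+1) * G)" by (simp add: mult.assoc)
  also have "\<dots> < 4 * B * (2^n * F)" using IH B0 unfolding G_def F_def by simp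
  finally have "real (n+3) * A * G < 4 * B * (2^n * F)" .
  hence "real (n+3) * (A * G) < 2^(n+2) * (F * B)" by (simp add: algebra_simps power_add)
  moreover have "n+2+1 = n+3" by simp
  ultimately show ?thesis using G' F' by (simp only:)
qed

lemma claim_base4:
  fixes u :: complex
  assumes u: "Re u \<ge> 0"
  shows "real (3+1) * (\<Prod>j<3. cmod (u + of_nat (3+1) - 2 * of_nat j)) < 2^3 * (\<Prod>m<3. cmod (u + of_nat m + 1))"
proof -
  have e1: "(\<Prod>j<3. cmod (u + of_nat (3+1) - 2 * of_nat j)) = cmod (u + 4) * cmod (u + 2) * cmod u"
    by (simp add: eval_nat_numeral algebra_simps)
  have e2: "(\<Prod>m<3::nat. cmod (u + of_nat m + 1)) = cmod (u + 1) * cmod (u + 2) * cmod (u + 3)"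
    by (simp add: eval_nat_numeral algebra_simps)
  have h1: "3 * cmod (u + 4) \<le> 4 * cmod (u + 3)"
    using norm_shift_mono[OF u, of 3 4] by simp
  have h2: "cmod u \<le> cmod (u + 1)" using norm_abs_le[OF u, of 0 1] by simp
  have p1: "cmod (u+1) > 0" "cmod (u+2) > 0" "cmod (u+3) > 0"
    using norm_pos_shift[OF u, of 1] norm_pos_shift[OF u, of 2] norm_pos_shift[OF u, of 3] by auto
  have "3 * cmod (u + 4) * cmod u \<le> 4 * cmod (u + 3) * cmod (u + 1)"
    using mult_mono[OF h1 h2] by simp
  hence "3 * cmod (u + 4) * cmod u * cmod (u+2) \<le> 4 * cmod (u + 3) * cmod (u + 1) * cmod (u+2)"
    by (simp add: mult_right_mono)
  moreover have "cmod (u + 3) * cmod (u + 1) * cmod (u+2) > 0" using p1 by simp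
  ultimately show ?thesis unfolding e1 e2 by (simp add: algebra_simps)
qed

lemma claim_base5:
  fixes u :: complex
  assumes u: "Re u \<ge> 0"
  shows "real (4+1) * (\<Prod>j<4. cmod (u + of_nat (4+1) - 2 * of_nat j)) < 2^4 * (\<Prod>m<4. cmod (u + of_nat m + 1))"
proof -
  have e1: "(\<Prod>j<4. cmod (u + of_nat (4+1) - 2 * of_nat j)) = cmod (u + 5) * cmod (u + 3) * cmod (u + 1) * cmod (u - 1)"
    by (simp add: eval_nat_numeral algebra_simps)
  have e2: "(\<Prod>m<4::nat. cmod (u + of_nat m + 1)) = cmod (u + 1) * cmod (u + 2) * cmod (u + 3) * cmod (u + 4)"
    by (simp add: eval_nat_numeral algebra_simps)
  have h1: "4 * cmod (u + 5) \<le> 5 * cmod (u + 4)"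
    using norm_shift_mono[OF u, of 4 5] by simp
  have h2: "cmod (u - 1) \<le> cmod (u + 2)" using norm_abs_le[OF u, of "-1" 2] by simp
  have p1: "cmod (u+1) > 0" "cmod (u+2) > 0" "cmod (u+3) > 0" "cmod (u+4) > 0"
    using norm_pos_shift[OF u, of 1] norm_pos_shift[OF u, of 2] norm_pos_shift[OF u, of 3]
      norm_pos_shift[OF u, of 4] by auto
  have "4 * cmod (u + 5) * cmod (u - 1) \<le> 5 * cmod (u + 4) * cmod (u + 2)"
    using mult_mono[OF h1 h2] by simp
  hence "4 * cmod (u + 5) * cmod (u - 1) * (cmod (u+1) * cmod (u+3)) \<le> 5 * cmod (u + 4) * cmod (u + 2) * (cmod (u+1) * cmod (u+3))"
    by (simp add: mult_right_mono)
  moreover have "cmod (u + 4) * cmod (u + 2) * (cmod (u+1) * cmod (u+3)) > 0" using p1 by simp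
  ultimately show ?thesis unfolding e1 e2 by (simp add: algebra_simps)
qed

lemma claim_all:
  fixes u :: complex
  assumes u: "Re u \<ge> 0" and n: "n \<ge> 3"
  shows "real (n+1) * (\<Prod>j<n. cmod (u + of_nat (n+1) - 2 * of_nat j)) < 2^n * (\<Prod>m<n. cmod (u + of_nat m + 1))"
proof -
  let ?C = "\<lambda>n. real (n+1) * (\<Prod>j<n. cmod (u + of_nat (n+1) - 2 * of_nat j)) < 2^n * (\<Prod>m<n. cmod (u + of_nat m + 1))"
  have "?C (k+3) \<and> ?C (k+4)" for k
  proof (induction k)
    case 0 thus ?case using claim_base4[OF u] claim_base5[OF u] by simp
  next
    case (Suc k)
    have c3: "?C (k+3)" using Suc.IH by (rule conjunct1)
    have "?C (k+3+2)" by (rule claim_step[OF u _ c3]) simp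
    moreover have "k+3+2 = Suc k + 4" by simp
    ultimately have "?C (Suc k + 4)" by (simp only:)
    moreover have "Suc k + 3 = k + 4" by simp
    ultimately show ?case using Suc by (simp only:)
  qed
  from this[of "n-3"] n show ?thesis by simp
qed

lemma root_re_gt:
  fixes z :: complex and d :: nat
  assumes d: "d \<ge> 4" and eq: "(\<Prod>i<d-1. 2*z + of_nat (i+1)) = of_nat d * (\<Prod>i<d-1. z + of_nat i)"
  shows "- real d / 2 < Re z"
proof (rule ccontr)
  assume "\<not> - real d / 2 < Re z"
  hence zr: "Re z \<le> - real d / 2" by simp
  define n where "n = d - 1"
  have n: "d = n + 1" "n \<ge> 3" using d unfolding n_def by auto
  define u where "u = - (2*z + of_nat d)"
  have u: "Re u \<ge> 0" unfolding u_def using zr by simp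
  have "(\<Prod>i<n. cmod (2*z + of_nat (i+1))) = (\<Prod>i<n. cmod (u + of_nat (n - Suc i) + 1))"
  proof (intro prod.cong refl)
    fix i assume "i \<in> {..<n}"
    hence "of_nat (n - Suc i) = (of_nat n - of_nat i - 1 :: complex)" by (simp add: of_nat_diff)
    hence "u + of_nat (n - Suc i) + 1 = - (2*z + of_nat (i+1))" unfolding u_def n by (simp add: algebra_simps)
    thus "cmod (2*z + of_nat (i+1)) = cmod (u + of_nat (n - Suc i) + 1)" by (metis norm_minus_cancel)
  qed
  also have "\<dots> = (\<Prod>m<n. cmod (u + of_nat m + 1))"
    by (rule prod.nat_diff_reindex[where g = "\<lambda>m. cmod (u + of_nat m + 1)"])
  finally have F: "cmod (\<Prod>i<n. 2*z + of_nat (i+1)) = (\<Prod>m<n. cmod (u + of_nat m + 1))"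
    by (simp add: prod_norm)
  have "(\<Prod>i<n. cmod (z + of_nat i)) = (\<Prod>i<n. cmod (u + of_nat (n+1) - 2 * of_nat i) / 2)"
  proof (intro prod.cong refl)
    fix i assume "i \<in> {..<n}"
    have e: "u + of_nat (n+1) - 2 * of_nat i = - 2 * (z + of_nat i)" unfolding u_def n by (simp add: algebra_simps)
    have "cmod (u + of_nat (n+1) - 2 * of_nat i) = cmod (- 2 * (z + of_nat i))" unfolding e ..
    also have "\<dots> = 2 * cmod (z + of_nat i)" by (simp only: norm_mult) simp
    finally have "cmod (u + of_nat (n+1) - 2 * of_nat i) = 2 * cmod (z + of_nat i)" .
    thus "cmod (z + of_nat i) = cmod (u + of_nat (n+1) - 2 * of_nat i) / 2" by simp
  qed
  also have "\<dots> = (\<Prod>i<n. cmod (u + of_nat (n+1) - 2 * of_nat i)) / 2^n"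
    by (simp add: prod_dividef)
  finally have G: "cmod (\<Prod>i<n. z + of_nat i) = (\<Prod>i<n. cmod (u + of_nat (n+1) - 2 * of_nat i)) / 2^n"
    by (simp add: prod_norm)
  have eq': "(\<Prod>i<n. 2*z + of_nat (i+1)) = of_nat d * (\<Prod>i<n. z + of_nat i)"
    using eq unfolding n_def .
  have "cmod (\<Prod>i<n. 2*z + of_nat (i+1)) = real d * cmod (\<Prod>i<n. z + of_nat i)"
    unfolding eq' norm_mult norm_of_nat ..
  hence "2^n * (\<Prod>m<n. cmod (u + of_nat m + 1)) = real (n+1) * (\<Prod>i<n. cmod (u + of_nat (n+1) - 2 * of_nat i))"
    unfolding F G n by (simp add: field_simps)
  moreover have "real (n+1) * (\<Prod>j<n. cmod (u + of_nat (n+1) - 2 * of_nat j)) < 2^n * (\<Prod>m<n. cmod (u + of_nat m + 1))"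
    by (rule claim_all[OF u n(2)])
  ultimately show False by simp
qed



definition vec_of :: "('n::finite \<Rightarrow> nat) \<Rightarrow> real^'n" where "vec_of f = (\<chi> i. real (f i))"
definition FF :: "nat \<Rightarrow> ('n::finite \<Rightarrow> nat) set" where "FF m = {f. (\<forall>i. f i \<le> m) \<and> sum f UNIV = 2*m}"

lemma rho_nth: "rho (e :: 'n::finite set) $ k = (if k \<in> e then 1 else 0)"
  unfolding rho_def by (simp add: axis_def)

lemma rho_sum: "(\<Sum>k\<in>UNIV. rho (e :: 'n::finite set) $ k) = real (card e)"
  unfolding rho_nth by (simp add: sum.If_cases)

lemma edge_card: "e \<in> complete_graph_edges \<Longrightarrow> card e = 2"
  unfolding complete_graph_edges_def by auto

lemma P_sub:
  assumes "y \<in> edge_polytope (complete_graph_edges :: 'n::finite set set)"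
  shows "(\<forall>i. 0 \<le> y$i \<and> y$i \<le> 1) \<and> (\<Sum>i\<in>UNIV. y$i) = 2"
proof -
  define C where "C = {y::real^'n. (\<forall>i. 0 \<le> y$i \<and> y$i \<le> 1) \<and> (\<Sum>i\<in>UNIV. y$i) = 2}"
  have "convex C"
    unfolding convex_def
  proof (intro ballI allI impI)
    fix x y :: "real^'n" and u v :: real
    assume x: "x \<in> C" and y: "y \<in> C" and uv: "0 \<le> u" "0 \<le> v" "u + v = 1"
    have c: "0 \<le> u * x$i + v * y$i \<and> u * x$i + v * y$i \<le> 1" for i
    proof -
      have "x$i \<le> 1" "y$i \<le> 1" using x y unfolding C_def by auto
      hence "u * x$i \<le> u * 1" "v * y$i \<le> v * 1" using uv by (metis mult_left_mono)+
      thus ?thesis using x y uv unfolding C_def by auto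
    qed
    have "(\<Sum>i\<in>UNIV. u * x$i + v * y$i) = u * (\<Sum>i\<in>UNIV. x$i) + v * (\<Sum>i\<in>UNIV. y$i)"
      by (simp add: sum.distrib sum_distrib_left)
    also have "\<dots> = 2" using x y uv unfolding C_def by (simp add: algebra_simps)
    finally show "u *\<^sub>R x + v *\<^sub>R y \<in> C" using c unfolding C_def by simp
  qed
  moreover have "rho ` complete_graph_edges \<subseteq> C"
  proof
    fix x assume "x \<in> rho ` (complete_graph_edges :: 'n set set)"
    then obtain e where e: "e \<in> complete_graph_edges" "x = rho e" by auto
    show "x \<in> C" unfolding C_def using e rho_sum[of e] edge_card[OF e(1)] by (simp add: rho_nth)
  qed
  ultimately have "edge_polytope (complete_graph_edges :: 'n set set) \<subseteq> C"
    unfolding edge_polytope_def by (rule hull_minimal[rotated])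
  thus ?thesis using assms unfolding C_def by blast
qed

lemma two_elems:
  assumes "CARD('n::finite) \<ge> 2"
  shows "\<exists>i j::'n. i \<noteq> j"
proof -
  have "\<not> (\<forall>a\<in>(UNIV::'n set). \<forall>b\<in>UNIV. a = b)"
    using card_le_Suc0_iff_eq[of "UNIV :: 'n set"] assms by auto
  thus ?thesis by blast
qed

lemma vec_of_nth [simp]: "vec_of f $ i = real (f i)"
  by (simp add: vec_of_def)

lemma FF_in:
  assumes card2: "CARD('n::finite) \<ge> 2"
  shows "f \<in> FF m \<Longrightarrow> vec_of f \<in> (\<lambda>y. real m *\<^sub>R y) ` edge_polytope (complete_graph_edges :: 'n set set)"
proof (induction m arbitrary: f)
  case 0
  hence f0: "f = (\<lambda>_. 0)" unfolding FF_def by auto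
  obtain i j :: 'n where ij: "i \<noteq> j" using two_elems[OF card2] by blast
  have "{i,j} \<in> (complete_graph_edges :: 'n set set)" unfolding complete_graph_edges_def using ij by auto
  hence "rho {i,j} \<in> edge_polytope (complete_graph_edges :: 'n set set)"
    unfolding edge_polytope_def by (intro hull_inc) auto
  moreover have "vec_of f = real 0 *\<^sub>R rho {i,j}" using f0 by (simp add: vec_eq_iff)
  ultimately show ?case by blast
next
  case (Suc k)
  define P where "P = edge_polytope (complete_graph_edges :: 'n set set)"
  have fle: "\<forall>l. f l \<le> Suc k" and fsum: "sum f UNIV = 2 * Suc k" using Suc.prems unfolding FF_def by auto
  define i where "i = (SOME i. f i = Max (range f))"
  have "Max (range f) \<in> range f" by (intro Max_in) auto
  then obtain i0 where "f i0 = Max (range f)" by (metis rangeE)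
  hence fi: "f i = Max (range f)" unfolding i_def by (rule someI)
  have imax: "f l \<le> f i" for l unfolding fi by (intro Max_ge) auto
  have ne: "UNIV - {i} \<noteq> {}"
  proof -
    obtain a b :: 'n where "a \<noteq> b" using two_elems[OF card2] by blast
    hence "a \<in> UNIV - {i} \<or> b \<in> UNIV - {i}" by auto
    thus ?thesis by blast
  qed
  define j where "j = (SOME j. j \<in> UNIV - {i} \<and> f j = Max (f ` (UNIV - {i})))"
  have "Max (f ` (UNIV - {i})) \<in> f ` (UNIV - {i})" using ne by (intro Max_in) auto
  then obtain j0 where "j0 \<in> UNIV - {i} \<and> f j0 = Max (f ` (UNIV - {i}))" by (metis (no_types, lifting) imageE)
  hence "j \<in> UNIV - {i} \<and> f j = Max (f ` (UNIV - {i}))" unfolding j_def by (rule someI)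
  hence j: "j \<in> UNIV - {i}" "f j = Max (f ` (UNIV - {i}))" by auto
  have ij: "i \<noteq> j" using j by auto
  have jmax: "l \<noteq> i \<Longrightarrow> f l \<le> f j" for l unfolding j(2) by (intro Max_ge) auto
  have sum_split: "sum f UNIV = f i + sum f (UNIV - {i})" by (simp add: sum.remove)
  have fi1: "f i \<ge> 1"
  proof (rule ccontr)
    assume "\<not> f i \<ge> 1" hence "f i = 0" by simp
    hence "\<forall>l. f l = 0" using imax by (metis le_zero_eq)
    thus False using fsum by simp
  qed
  have fj1: "f j \<ge> 1"
  proof (rule ccontr)
    assume "\<not> f j \<ge> 1" hence "f j = 0" by simp
    hence "\<forall>l\<in>UNIV - {i}. f l = 0" using jmax by (metis Diff_iff insertCI le_zero_eq)
    hence "sum f (UNIV - {i}) = 0" by simp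
    thus False using fsum sum_split fle[rule_format, of i] by simp
  qed
  define g where "g l = f l - (if l = i \<or> l = j then 1 else 0)" for l
  have fg: "f l = g l + (if l = i \<or> l = j then 1 else 0)" for l
    unfolding g_def using fi1 fj1 by auto
  have "sum f UNIV = sum g UNIV + (\<Sum>l\<in>UNIV. if l = i \<or> l = j then 1 else 0)"
  proof -
    have "sum f UNIV = (\<Sum>l\<in>UNIV. g l + (if l = i \<or> l = j then 1 else 0))"
      by (rule sum.cong) (use fg in auto)
    thus ?thesis by (simp only: sum.distrib)
  qed
  also have "(\<Sum>l\<in>UNIV. if l = i \<or> l = j then 1 else (0::nat)) = card {i,j}"
    by (simp add: sum.If_cases Collect_disj_eq insert_commute)
  also have "card {i,j} = 2" using ij by simp
  finally have gsum: "sum g UNIV = 2 * k" using fsum by simp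
  have gle: "g l \<le> k" for l
  proof (cases "l = i \<or> l = j")
    case True
    have "f l \<le> Suc k" using fle by simp
    thus ?thesis unfolding g_def using True by auto
  next
    case False
    hence gl: "g l = f l" unfolding g_def by simp
    show ?thesis
    proof (rule ccontr)
      assume "\<not> g l \<le> k"
      moreover have "f l \<le> Suc k" using fle by simp
      ultimately have fl: "f l = Suc k" using gl by simp
      have "f l \<le> f j" using False by (intro jmax) auto
      moreover have "f j \<le> Suc k" "f i \<le> Suc k" "f j \<le> f i" using fle imax by auto
      ultimately have "f j = Suc k" "f i = Suc k" using fl by auto
      have "sum f {i,j,l} \<le> sum f UNIV" by (intro sum_mono2) auto
      moreover have "sum f {i,j,l} = f i + f j + f l" proof -
        have "l \<noteq> i" "l \<noteq> j" using False by auto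
        thus ?thesis using ij by (simp add: add.assoc)
      qed
      ultimately show False using fsum \<open>f j = Suc k\<close> \<open>f i = Suc k\<close> fl by simp
    qed
  qed
  have "g \<in> FF k" unfolding FF_def using gle gsum by auto
  from Suc.IH[OF this] obtain y' where y': "y' \<in> P" "vec_of g = real k *\<^sub>R y'" unfolding P_def by auto
  have e: "{i,j} \<in> (complete_graph_edges :: 'n set set)" unfolding complete_graph_edges_def using ij by auto
  hence r: "rho {i,j} \<in> P" unfolding P_def edge_polytope_def by (intro hull_inc) auto
  define y where "y = (real k / real (Suc k)) *\<^sub>R y' + (1 / real (Suc k)) *\<^sub>R rho {i,j}"
  have "y \<in> P" unfolding y_def P_def edge_polytope_def
    by (rule convexD[OF convex_convex_hull]) (use y'(1) r in \<open>auto simp: P_def edge_polytope_def field_simps\<close>)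
  moreover have "vec_of f = real (Suc k) *\<^sub>R y"
  proof -
    have "vec_of f $ l = (real (Suc k) *\<^sub>R y) $ l" for l
    proof -
      have "(real (Suc k) *\<^sub>R y) $ l = real k * y' $ l + rho {i,j} $ l"
        unfolding y_def by (simp add: field_simps del: of_nat_Suc)
      also have "real k * y' $ l = real (g l)"
      proof -
        have "vec_of g $ l = (real k *\<^sub>R y') $ l" using y'(2) by simp
        thus ?thesis by simp
      qed
      finally show ?thesis using fg[of l] by (simp add: rho_nth)
    qed
    thus ?thesis by (simp add: vec_eq_iff)
  qed
  ultimately show ?case unfolding P_def by blast
qed

lemma int_nonneg_nat: "(t::real) \<in> \<int> \<Longrightarrow> t \<ge> 0 \<Longrightarrow> real (nat \<lfloor>t\<rfloor>) = t"
  by (metis Ints_cases floor_of_int of_int_0_le_iff of_nat_nat of_int_of_nat_eq)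

lemma lattice_eq:
  assumes card2: "CARD('n::finite) \<ge> 2"
  shows "{x \<in> (\<lambda>y. real m *\<^sub>R y) ` edge_polytope (complete_graph_edges :: 'n set set). \<forall>i. x$i \<in> \<int>} = vec_of ` FF m"
proof
  show "vec_of ` FF m \<subseteq> {x \<in> (\<lambda>y. real m *\<^sub>R y) ` edge_polytope (complete_graph_edges :: 'n set set). \<forall>i. x$i \<in> \<int>}"
    using FF_in[OF card2] by auto
next
  show "{x \<in> (\<lambda>y. real m *\<^sub>R y) ` edge_polytope (complete_graph_edges :: 'n set set). \<forall>i. x$i \<in> \<int>} \<subseteq> vec_of ` FF m"
  proof
    fix x assume "x \<in> {x \<in> (\<lambda>y. real m *\<^sub>R y) ` edge_polytope (complete_graph_edges :: 'n set set). \<forall>i. x$i \<in> \<int>}"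
    then obtain y where y: "y \<in> edge_polytope (complete_graph_edges :: 'n set set)" "x = real m *\<^sub>R y"
      and xi: "\<forall>i. x$i \<in> \<int>" by auto
    have yb: "\<forall>i. 0 \<le> y$i \<and> y$i \<le> 1" and ys: "(\<Sum>i\<in>UNIV. y$i) = 2" using P_sub[OF y(1)] by auto
    define f where "f i = nat \<lfloor>x$i\<rfloor>" for i
    have x0: "x$i \<ge> 0" for i using yb y(2) by simp
    have xm: "x$i \<le> real m" for i
    proof -
      have "real m * y$i \<le> real m * 1" using yb by (intro mult_left_mono) auto
      thus ?thesis using y(2) by simp
    qed
    have fx: "real (f i) = x$i" for i unfolding f_def using int_nonneg_nat xi x0 by blast
    have fm: "f i \<le> m" for i using fx[of i] xm[of i] by (metis of_nat_le_iff)
    have "real (sum f UNIV) = (\<Sum>i\<in>UNIV. x$i)" by (simp add: fx)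
    also have "\<dots> = real m * (\<Sum>i\<in>UNIV. y$i)" using y(2) by (simp add: sum_distrib_left)
    also have "\<dots> = real (2*m)" using ys by simp
    finally have "sum f UNIV = 2*m" by (simp only: of_nat_eq_iff)
    hence "f \<in> FF m" using fm unfolding FF_def by auto
    moreover have "x = vec_of f" using fx by (simp add: vec_eq_iff)
    ultimately show "x \<in> vec_of ` FF m" by blast
  qed
qed

lemma inj_vec_of: "inj vec_of"
proof
  fix f g :: "'n::finite \<Rightarrow> nat" assume "vec_of f = vec_of g"
  hence "real (f i) = real (g i)" for i by (metis vec_of_nth)
  thus "f = g" by auto
qed

lemma count_eq_FF:
  assumes card2: "CARD('n::finite) \<ge> 2"
  shows "lattice_points_count (edge_polytope (complete_graph_edges :: 'n set set)) m = card (FF m :: ('n \<Rightarrow> nat) set)"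
  unfolding lattice_points_count_def lattice_eq[OF card2]
  by (rule card_image) (meson inj_vec_of inj_on_subset subset_UNIV)

lemma card_S:
  "card {f :: 'n::finite \<Rightarrow> nat. sum f UNIV = s} = (s + CARD('n) - 1) choose s"
proof -
  define d where "d = CARD('n)"
  obtain h where h: "bij_betw h {0..<d} (UNIV::'n set)"
    using ex_bij_betw_nat_finite[of "UNIV :: 'n set"] unfolding d_def by auto
  have injh: "inj_on h {0..<d}" and imh: "h ` {0..<d} = UNIV" using h by (auto simp: bij_betw_def)
  define \<Phi> where "\<Phi> f = map (f \<circ> h) [0..<d]" for f :: "'n \<Rightarrow> nat"
  have sumP: "sum_list (\<Phi> f) = sum f UNIV" for f
  proof -
    have "sum_list (\<Phi> f) = sum (f \<circ> h) {0..<d}"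
      unfolding \<Phi>_def by (simp add: interv_sum_list_conv_sum_set_nat)
    also have "\<dots> = sum f (h ` {0..<d})" by (rule sum.reindex[OF injh, symmetric])
    finally show ?thesis using imh by simp
  qed
  have inj: "inj_on \<Phi> {f. sum f UNIV = s}"
  proof
    fix f g assume "\<Phi> f = \<Phi> g"
    hence fg: "f (h k) = g (h k)" if "k < d" for k
      using that unfolding \<Phi>_def by (metis (no_types, lifting) add_0 diff_zero length_map length_upt nth_map nth_upt comp_apply)
    show "f = g"
    proof
      fix i :: 'n
      have "i \<in> h ` {0..<d}" using imh by simp
      then obtain k where "k < d" "i = h k" by auto
      thus "f i = g i" using fg by simp
    qed
  qed
  have im: "\<Phi> ` {f. sum f UNIV = s} = {l. length l = d \<and> sum_list l = s}"
  proof
    show "\<Phi> ` {f. sum f UNIV = s} \<subseteq> {l. length l = d \<and> sum_list l = s}"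
      using sumP by (auto simp: \<Phi>_def)
  next
    show "{l. length l = d \<and> sum_list l = s} \<subseteq> \<Phi> ` {f. sum f UNIV = s}"
    proof
      fix l :: "nat list" assume l: "l \<in> {l. length l = d \<and> sum_list l = s}"
      define f where "f i = l ! (inv_into {0..<d} h i)" for i
      have "\<Phi> f = l"
      proof (rule nth_equalityI)
        show "length (\<Phi> f) = length l" using l by (simp add: \<Phi>_def)
        fix k assume "k < length (\<Phi> f)"
        hence k: "k < d" by (simp add: \<Phi>_def)
        hence "\<Phi> f ! k = f (h k)" by (simp add: \<Phi>_def)
        also have "\<dots> = l ! k" unfolding f_def using injh k by (simp add: inv_into_f_f)
        finally show "\<Phi> f ! k = l ! k" .
      qed
      moreover have "sum f UNIV = s" using sumP[of f] l \<open>\<Phi> f = l\<close> by simp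
      ultimately show "l \<in> \<Phi> ` {f. sum f UNIV = s}" by blast
    qed
  qed
  have "card {f :: 'n \<Rightarrow> nat. sum f UNIV = s} = card {l. length l = d \<and> sum_list l = s}"
    using card_image[OF inj] im by simp
  also have "\<dots> = (s + d - 1) choose s" by (rule card_length_sum_list)
  finally show ?thesis unfolding d_def .
qed

lemma finite_S: "finite {f :: 'n::finite \<Rightarrow> nat. sum f UNIV = s}"
proof (rule finite_subset)
  show "{f :: 'n \<Rightarrow> nat. sum f UNIV = s} \<subseteq> PiE UNIV (\<lambda>_. {..s})"
  proof
    fix f :: "'n \<Rightarrow> nat" assume "f \<in> {f. sum f UNIV = s}"
    hence fs: "sum f UNIV = s" by simp
    have "f i \<le> s" for i unfolding fs[symmetric] by (rule member_le_sum) auto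
    thus "f \<in> PiE UNIV (\<lambda>_. {..s})" by (simp add: PiE_UNIV_domain)
  qed
  show "finite (PiE UNIV (\<lambda>_::'n. {..s}))" by (rule finite_PiE) auto
qed

lemma card_B:
  fixes i :: "'n::finite"
  shows "card {f :: 'n \<Rightarrow> nat. sum f UNIV = 2*m \<and> f i > m} = card {g :: 'n \<Rightarrow> nat. sum g UNIV + (m+1) = 2*m}"
proof -
  define \<psi> where "\<psi> g = (\<lambda>k. g k + (if k = i then m+1 else 0))" for g :: "'n \<Rightarrow> nat"
  have sp: "sum (\<psi> g) UNIV = sum g UNIV + (m+1)" for g
    unfolding \<psi>_def by (simp add: sum.distrib)
  have inj: "inj_on \<psi> {g :: 'n \<Rightarrow> nat. sum g UNIV + (m+1) = 2*m}"
  proof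
    fix g1 g2 assume "\<psi> g1 = \<psi> g2"
    hence "\<psi> g1 k = \<psi> g2 k" for k by simp
    hence "g1 k + (if k = i then m+1 else 0) = g2 k + (if k = i then m+1 else 0)" for k
      unfolding \<psi>_def .
    thus "g1 = g2" by auto
  qed
  have "\<psi> ` {g. sum g UNIV + (m+1) = 2*m} = {f. sum f UNIV = 2*m \<and> f i > m}"
  proof
    show "\<psi> ` {g. sum g UNIV + (m+1) = 2*m} \<subseteq> {f. sum f UNIV = 2*m \<and> f i > m}"
      using sp by (auto simp: \<psi>_def)
  next
    show "{f. sum f UNIV = 2*m \<and> f i > m} \<subseteq> \<psi> ` {g. sum g UNIV + (m+1) = 2*m}"
    proof
      fix f assume f: "f \<in> {f :: 'n \<Rightarrow> nat. sum f UNIV = 2*m \<and> f i > m}"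
      define g where "g k = f k - (if k = i then m+1 else 0)" for k
      have "\<psi> g = f" using f by (auto simp: \<psi>_def g_def)
      moreover have "sum g UNIV + (m+1) = 2*m" using sp[of g] \<open>\<psi> g = f\<close> f by simp
      ultimately show "f \<in> \<psi> ` {g. sum g UNIV + (m+1) = 2*m}" by blast
    qed
  qed
  thus ?thesis using card_image[OF inj] by simp
qed

lemma card_FF:
  "card (FF m :: ('n::finite \<Rightarrow> nat) set) + CARD('n) * card {g :: 'n \<Rightarrow> nat. sum g UNIV + (m+1) = 2*m}
     = card {f :: 'n \<Rightarrow> nat. sum f UNIV = 2*m}"
proof -
  define A where "A = {f :: 'n \<Rightarrow> nat. sum f UNIV = 2*m}"
  define B where "B i = {f :: 'n \<Rightarrow> nat. sum f UNIV = 2*m \<and> f i > m}" for i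
  have fA: "finite A" unfolding A_def by (rule finite_S)
  have AU: "A = FF m \<union> (\<Union>i. B i)" unfolding A_def B_def FF_def by (auto simp: not_le)
  have disj1: "FF m \<inter> (\<Union>i. B i) = {}" unfolding B_def FF_def by (auto simp: not_le dest: leD)
  have fB: "finite (B i)" for i by (rule finite_subset[OF _ fA]) (auto simp: A_def B_def)
  have fF: "finite (FF m :: ('n \<Rightarrow> nat) set)" by (rule finite_subset[OF _ fA]) (auto simp: A_def FF_def)
  have disj2: "B i \<inter> B j = {}" if "i \<noteq> j" for i j
  proof (rule ccontr)
    assume "B i \<inter> B j \<noteq> {}"
    then obtain f where f: "sum f UNIV = 2*m" "f i > m" "f j > m" unfolding B_def by auto
    have "sum f {i,j} \<le> sum f UNIV" by (intro sum_mono2) auto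
    thus False using f that by simp
  qed
  have "card A = card (FF m :: ('n \<Rightarrow> nat) set) + card (\<Union>i. B i)"
  proof -
    have fU: "finite (\<Union>i. B i)" using fB by auto
    show ?thesis unfolding AU using card_Un_disjoint[OF fF fU disj1] by simp
  qed
  also have "card (\<Union>i. B i) = (\<Sum>i\<in>UNIV. card (B i))"
    by (rule card_UN_disjoint) (use fB disj2 in auto)
  also have "\<dots> = (\<Sum>i\<in>(UNIV::'n set). card {g :: 'n \<Rightarrow> nat. sum g UNIV + (m+1) = 2*m})"
    unfolding B_def by (intro sum.cong refl card_B)
  finally show ?thesis unfolding A_def by simp
qed

lemma choose_poch: "real ((s + k) choose k) = pochhammer (real s + 1) k / fact k"
proof -
  have "real ((s+k) choose k) = (real (s+k) gchoose k)" by (rule binomial_gbinomial)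
  also have "\<dots> = pochhammer (real (s+k) - real k + 1) k / fact k" by (rule gbinomial_pochhammer')
  finally show ?thesis by simp
qed

lemma count_formula:
  assumes d1: "CARD('n::finite) \<ge> 2"
  shows "real (card (FF m :: ('n \<Rightarrow> nat) set))
    = (pochhammer (2 * real m + 1) (CARD('n) - 1) - real CARD('n) * pochhammer (real m) (CARD('n) - 1)) / fact (CARD('n) - 1)"
proof -
  define d where "d = CARD('n)"
  define k where "k = d - 1"
  have dk: "d = k + 1" "k \<ge> 1" using d1 unfolding k_def d_def by auto
  have A: "real (card {f :: 'n \<Rightarrow> nat. sum f UNIV = 2*m}) = pochhammer (2 * real m + 1) k / fact k"
  proof -
    have "card {f :: 'n \<Rightarrow> nat. sum f UNIV = 2*m} = (2*m + k) choose (2*m)"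
      unfolding card_S d_def[symmetric] using dk by simp
    also have "\<dots> = (2*m + k) choose k" by (subst binomial_symmetric) auto
    finally show ?thesis using choose_poch[of "2*m" k] by simp
  qed
  have B: "real (card {g :: 'n \<Rightarrow> nat. sum g UNIV + (m+1) = 2*m}) = pochhammer (real m) k / fact k"
  proof (cases "m = 0")
    case True
    hence "{g :: 'n \<Rightarrow> nat. sum g UNIV + (m+1) = 2*m} = {}" by auto
    thus ?thesis using True dk by (simp add: pochhammer_0_left)
  next
    case False
    hence e: "{g :: 'n \<Rightarrow> nat. sum g UNIV + (m+1) = 2*m} = {g. sum g UNIV = m - 1}" by auto
    have "card {g :: 'n \<Rightarrow> nat. sum g UNIV + (m+1) = 2*m} = (m - 1 + k) choose (m - 1)"
      unfolding e card_S d_def[symmetric] using dk by simp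
    also have "\<dots> = (m - 1 + k) choose k" by (subst binomial_symmetric) auto
    finally show ?thesis using choose_poch[of "m-1" k] False by (simp add: of_nat_diff)
  qed
  have "real (card (FF m :: ('n \<Rightarrow> nat) set)) = real (card {f :: 'n \<Rightarrow> nat. sum f UNIV = 2*m})
     - real d * real (card {g :: 'n \<Rightarrow> nat. sum g UNIV + (m+1) = 2*m})"
  proof -
    have cf: "card (FF m :: ('n \<Rightarrow> nat) set) + d * card {g :: 'n \<Rightarrow> nat. sum g UNIV + (m+1) = 2*m}
      = card {f :: 'n \<Rightarrow> nat. sum f UNIV = 2*m}" unfolding d_def by (rule card_FF)
    have "real (card (FF m :: ('n \<Rightarrow> nat) set)) + real d * real (card {g :: 'n \<Rightarrow> nat. sum g UNIV + (m+1) = 2*m})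
      = real (card {f :: 'n \<Rightarrow> nat. sum f UNIV = 2*m})"
      using arg_cong[OF cf, of real] by (simp only: of_nat_add of_nat_mult)
    thus ?thesis by linarith
  qed
  also have "\<dots> = (pochhammer (2 * real m + 1) k - real d * pochhammer (real m) k) / fact k"
    unfolding A B by (simp add: diff_divide_distrib)
  finally show ?thesis unfolding k_def d_def .
qed


lemma map_poly_of_real_eval: "poly (map_poly complex_of_real p) (of_real x) = of_real (poly p x)"
  by (induction p) (auto simp: map_poly_pCons)

theorem proposition1p2:
  fixes p :: "real poly" and \<alpha> :: complex
  assumes "CARD('n::finite) \<ge> 3"
    and "is_ehrhart_poly (edge_polytope (complete_graph_edges :: 'n set set)) p"
    and "poly (map_poly complex_of_real p) \<alpha> = 0"
  shows "(CARD('n) = 3 \<longrightarrow> \<alpha> \<in> {-1, -2})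
       \<and> (CARD('n) \<ge> 4 \<longrightarrow> - real CARD('n) / 2 < Re \<alpha> \<and> Re \<alpha> < 0)"
proof -
  define d where "d = CARD('n)"
  define k where "k = d - 1"
  have d3: "d \<ge> 3" using assms(1) unfolding d_def .
  have card2: "CARD('n) \<ge> 2" using assms(1) by simp
  have pm: "poly p (real m) = (pochhammer (2*real m+1) k - real d * pochhammer (real m) k) / fact k" for m
    using assms(2) count_eq_FF[OF card2, of m] count_formula[OF card2, of m]
    unfolding is_ehrhart_poly_def d_def k_def by simp
  define Qc :: "complex poly" where
    "Qc = smult (1 / fact k) ((\<Prod>i<k. [:of_nat (i+1), 2:]) - smult (of_nat d) (\<Prod>i<k. [:of_nat i, 1:]))"
  have pQ: "poly Qc x = ((\<Prod>i<k. of_nat (i+1) + x * 2) - of_nat d * (\<Prod>i<k. of_nat i + x)) / fact k" for x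
    unfolding Qc_def by (simp add: poly_prod)
  have eqm: "poly (map_poly complex_of_real p) (of_nat m) = poly Qc (of_nat m)" for m
  proof -
    have "poly (map_poly complex_of_real p) (of_nat m) = of_real (poly p (real m))"
      using map_poly_of_real_eval[of p "real m"] by simp
    also have "\<dots> = of_real ((pochhammer (2*real m+1) k - real d * pochhammer (real m) k) / fact k)"
      using pm by simp
    also have "\<dots> = ((\<Prod>i<k. of_real (2*real m + 1 + real i)) - of_nat d * (\<Prod>i<k. of_real (real m + real i))) / fact k"
      by (simp add: pochhammer_prod atLeast0LessThan)
    also have "(\<Prod>i<k. of_real (2*real m + 1 + real i)) = (\<Prod>i<k. of_nat (i+1) + (of_nat m :: complex) * 2)"
      by (intro prod.cong refl) (simp add: algebra_simps)
    also have "(\<Prod>i<k. of_real (real m + real i)) = (\<Prod>i<k. of_nat i + (of_nat m :: complex))"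
      by (intro prod.cong refl) (simp add: algebra_simps)
    finally show ?thesis unfolding pQ .
  qed
  have Qeq: "map_poly complex_of_real p = Qc"
  proof (rule ccontr)
    assume ne: "map_poly complex_of_real p \<noteq> Qc"
    hence "map_poly complex_of_real p - Qc \<noteq> 0" by simp
    hence fin: "finite {x. poly (map_poly complex_of_real p - Qc) x = 0}" by (rule poly_roots_finite)
    have "range (of_nat :: nat \<Rightarrow> complex) \<subseteq> {x. poly (map_poly complex_of_real p - Qc) x = 0}"
      using eqm by auto
    moreover have "infinite (range (of_nat :: nat \<Rightarrow> complex))"
      by (intro range_inj_infinite inj_of_nat)
    ultimately show False using fin finite_subset by blast
  qed
  have "(\<Prod>i<k. of_nat (i+1) + \<alpha> * 2) - of_nat d * (\<Prod>i<k. of_nat i + \<alpha>) = 0"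
    using assms(3) unfolding Qeq pQ by simp
  hence root: "(\<Prod>i<k. of_nat (i+1) + \<alpha> * 2) = of_nat d * (\<Prod>i<k. of_nat i + \<alpha>)" by simp
  have root': "(\<Prod>i<d-1. 2*\<alpha> + of_nat (i+1)) = of_nat d * (\<Prod>i<d-1. \<alpha> + of_nat i)"
  proof -
    have "(\<Prod>i<d-1. 2*\<alpha> + of_nat (i+1)) = (\<Prod>i<k. of_nat (i+1) + \<alpha> * 2)"
      unfolding k_def by (intro prod.cong refl) (simp add: algebra_simps)
    also have "\<dots> = of_nat d * (\<Prod>i<k. of_nat i + \<alpha>)" by (rule root)
    also have "(\<Prod>i<k. of_nat i + \<alpha>) = (\<Prod>i<d-1. \<alpha> + of_nat i)"
      unfolding k_def by (intro prod.cong refl) (simp add: algebra_simps)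
    finally show ?thesis .
  qed
  show ?thesis
  proof (intro conjI impI)
    assume "CARD('n) = 3"
    hence dd: "d = 3" "k = 2" unfolding d_def k_def by auto
    have "(1 + \<alpha> * 2) * (2 + \<alpha> * 2) = 3 * (\<alpha> * (1 + \<alpha>))"
      using root unfolding dd by (simp add: eval_nat_numeral algebra_simps)
    moreover have "(\<alpha> + 1) * (\<alpha> + 2) = (1 + \<alpha> * 2) * (2 + \<alpha> * 2) - 3 * (\<alpha> * (1 + \<alpha>))"
      by (simp add: algebra_simps)
    ultimately have "(\<alpha> + 1) * (\<alpha> + 2) = 0" by simp
    hence "\<alpha> + 1 = 0 \<or> \<alpha> + 2 = 0" by simp
    moreover have "\<alpha> + 1 = 0 \<Longrightarrow> \<alpha> = -1" by (simp add: eq_neg_iff_add_eq_0)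
    moreover have "\<alpha> + 2 = 0 \<Longrightarrow> \<alpha> = -2" by (simp add: eq_neg_iff_add_eq_0)
    ultimately show "\<alpha> \<in> {-1, -2}" by blast
  next
    assume "CARD('n) \<ge> 4"
    hence d4: "d \<ge> 4" unfolding d_def .
    show "- real CARD('n) / 2 < Re \<alpha>" using root_re_gt[OF d4 root'] unfolding d_def .
  next
    assume "CARD('n) \<ge> 4"
    hence d4: "d \<ge> 3" unfolding d_def by simp
    show "Re \<alpha> < 0" using root_re_neg[OF d4 root'] .
  qed
qed

end
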